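(* Let $P$ be a weakly ranked poset, $\kappa\in\mathscr{I}(P)$ a $P$-kernel, and $Z=g\kappa f$ its $Z$-function, where $f,g$ are its right and left KLS-functions. Let $P^*$ be the opposite weakly ranked poset. Then $\kappa^*$ is a $P^*$-kernel and $Z^*\in\mathscr{I}(P^* )$ is the $Z$-function associated with $\kappa^*$.
   Context: A weakly ranked poset is a locally finite poset $P$ (all intervals finite) with a weak rank function: integers $r_{xy}$ for $x\le y$ with $r_{xy}>0$ for $x<y$ and $r_{xy}+r_{yz}=r_{xz}$. $I(P)=\prod_{x\le y}\mathbb{Z}[t]$ with components $f_{xy}(t)$ is a ring under convolution $(fg)_{xz}=\sum_{x\le y\le z}f_{xy}g_{yz}$ with identity $\delta$. $\mathscr{I}(P)$ is the subring of $f$ with $\deg f_{xy}\le r_{xy}$; involution $\bar f_{xy}(t)=t^{r_{xy}}f_{xy}(t^{-1})$. $\mathscr{I}_{1/2}(P)$: $f\in\mathscr{I}(P)$ with $f_{xx}=1$ and $\deg f_{xy}<r_{xy}/2$ for $x<y$. A $P$-kernel is $\kappa\in\mathscr{I}(P)$ with $\kappa_{xx}=1$ for all $x$ and $\kappa^{-1}=\bar\kappa$. For a $P$-kernel $\kappa$ there are unique $f,g\in\mathscr{I}_{1/2}(P)$ with $\bar f=\kappa f$, $\bar g=g\kappa$ (right and left KLS-functions); the $Z$-function is $Z:=g\kappa f$. The opposite $P^*$ has $y\le x$ in $P^*$ iff $x\le y$ in $P$, with $r^*_{yx}=r_{xy}$; for $f\in\mathscr{I}(P)$, $f^*\in\mathscr{I}(P^*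 )$ is defined by $f^*_{yx}:=f_{xy}$. *)

theory Defs
  imports "HOL-Computational_Algebra.Polynomial"
begin

text \<open>Elements of the incidence algebra I(P) are functions 'a => 'a => int poly; only
their values on pairs (x,y) in P with le x y matter.\<close>

definition weakly_ranked_poset ::
  "'a set \<Rightarrow> ('a \<Rightarrow> 'a \<Rightarrow> bool) \<Rightarrow> ('a \<Rightarrow> 'a \<Rightarrow> int) \<Rightarrow> bool" where
  "weakly_ranked_poset P le r \<longleftrightarrow>
     (\<forall>x\<in>P. le x x) \<and>
     (\<forall>x\<in>P. \<forall>y\<in>P. le x y \<and> le y x \<longrightarrow> x = y) \<and>
     (\<forall>x\<in>P. \<forall>y\<in>P. \<forall>z\<in>P. le x y \<and> le y z \<longrightarrow> le x z) \<and>
     (\<forall>x\<in>P. \<forall>y\<in>P. finite {z\<in>P. le x z \<and> le z y}) \<and>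
     (\<forall>x\<in>P. \<forall>y\<in>P. le x y \<and> x \<noteq> y \<longrightarrow> r x y > 0) \<and>
     (\<forall>x\<in>P. \<forall>y\<in>P. \<forall>z\<in>P. le x y \<and> le y z \<longrightarrow> r x y + r y z = r x z)"

definition conv ::
  "'a set \<Rightarrow> ('a \<Rightarrow> 'a \<Rightarrow> bool) \<Rightarrow> ('a \<Rightarrow> 'a \<Rightarrow> int poly) \<Rightarrow> ('a \<Rightarrow> 'a \<Rightarrow> int poly)
     \<Rightarrow> ('a \<Rightarrow> 'a \<Rightarrow> int poly)" where
  "conv P le f g = (\<lambda>x z. \<Sum>y\<in>{y\<in>P. le x y \<and> le y z}. f x y * g y z)"

definition delta :: "'a \<Rightarrow> 'a \<Rightarrow> int poly" where
  "delta = (\<lambda>x y. if x = y then 1 else 0)"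

definition eq_on ::
  "'a set \<Rightarrow> ('a \<Rightarrow> 'a \<Rightarrow> bool) \<Rightarrow> ('a \<Rightarrow> 'a \<Rightarrow> int poly) \<Rightarrow> ('a \<Rightarrow> 'a \<Rightarrow> int poly) \<Rightarrow> bool" where
  "eq_on P le f g \<longleftrightarrow> (\<forall>x\<in>P. \<forall>y\<in>P. le x y \<longrightarrow> f x y = g x y)"

text \<open>t^n p(t^{-1}) for a polynomial p of degree at most n.\<close>
definition bar_poly :: "nat \<Rightarrow> int poly \<Rightarrow> int poly" where
  "bar_poly n p = (\<Sum>i\<le>n. monom (coeff p i) (n - i))"

definition bar :: "('a \<Rightarrow> 'a \<Rightarrow> int) \<Rightarrow> ('a \<Rightarrow> 'a \<Rightarrow> int poly) \<Rightarrow> ('a \<Rightarrow> 'a \<Rightarrow> int poly)" where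
  "bar r f = (\<lambda>x y. bar_poly (nat (r x y)) (f x y))"

definition in_scrI ::
  "'a set \<Rightarrow> ('a \<Rightarrow> 'a \<Rightarrow> bool) \<Rightarrow> ('a \<Rightarrow> 'a \<Rightarrow> int) \<Rightarrow> ('a \<Rightarrow> 'a \<Rightarrow> int poly) \<Rightarrow> bool" where
  "in_scrI P le r f \<longleftrightarrow> (\<forall>x\<in>P. \<forall>y\<in>P. le x y \<longrightarrow> int (degree (f x y)) \<le> r x y)"

definition in_scrI_half ::
  "'a set \<Rightarrow> ('a \<Rightarrow> 'a \<Rightarrow> bool) \<Rightarrow> ('a \<Rightarrow> 'a \<Rightarrow> int) \<Rightarrow> ('a \<Rightarrow> 'a \<Rightarrow> int poly) \<Rightarrow> bool" where
  "in_scrI_half P le r f \<longleftrightarrow> in_scrI P le r f \<and> (\<forall>x\<in>P. f x x = 1) \<and>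
     (\<forall>x\<in>P. \<forall>y\<in>P. le x y \<and> x \<noteq> y \<longrightarrow> 2 * int (degree (f x y)) < r x y)"

definition is_kernel ::
  "'a set \<Rightarrow> ('a \<Rightarrow> 'a \<Rightarrow> bool) \<Rightarrow> ('a \<Rightarrow> 'a \<Rightarrow> int) \<Rightarrow> ('a \<Rightarrow> 'a \<Rightarrow> int poly) \<Rightarrow> bool" where
  "is_kernel P le r \<kappa> \<longleftrightarrow> in_scrI P le r \<kappa> \<and> (\<forall>x\<in>P. \<kappa> x x = 1) \<and>
     eq_on P le (conv P le \<kappa> (bar r \<kappa>)) delta \<and>
     eq_on P le (conv P le (bar r \<kappa>) \<kappa>) delta"

definition right_KLS ::
  "'a set \<Rightarrow> ('a \<Rightarrow> 'a \<Rightarrow> bool) \<Rightarrow> ('a \<Rightarrow> 'a \<Rightarrow> int) \<Rightarrow> ('a \<Rightarrow> 'a \<Rightarrow> int poly)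
     \<Rightarrow> ('a \<Rightarrow> 'a \<Rightarrow> int poly) \<Rightarrow> bool" where
  "right_KLS P le r \<kappa> f \<longleftrightarrow> in_scrI_half P le r f \<and> eq_on P le (bar r f) (conv P le \<kappa> f)"

definition left_KLS ::
  "'a set \<Rightarrow> ('a \<Rightarrow> 'a \<Rightarrow> bool) \<Rightarrow> ('a \<Rightarrow> 'a \<Rightarrow> int) \<Rightarrow> ('a \<Rightarrow> 'a \<Rightarrow> int poly)
     \<Rightarrow> ('a \<Rightarrow> 'a \<Rightarrow> int poly) \<Rightarrow> bool" where
  "left_KLS P le r \<kappa> g \<longleftrightarrow> in_scrI_half P le r g \<and> eq_on P le (bar r g) (conv P le g \<kappa>)"

text \<open>Z is the Z-function of kappa: the right and left KLS-functions exist and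
Z = g kappa f for (the unique) such f, g.\<close>
definition is_Z_function ::
  "'a set \<Rightarrow> ('a \<Rightarrow> 'a \<Rightarrow> bool) \<Rightarrow> ('a \<Rightarrow> 'a \<Rightarrow> int) \<Rightarrow> ('a \<Rightarrow> 'a \<Rightarrow> int poly)
     \<Rightarrow> ('a \<Rightarrow> 'a \<Rightarrow> int poly) \<Rightarrow> bool" where
  "is_Z_function P le r \<kappa> Z \<longleftrightarrow>
     (\<exists>f g. right_KLS P le r \<kappa> f \<and> left_KLS P le r \<kappa> g) \<and>
     (\<forall>f g. right_KLS P le r \<kappa> f \<and> left_KLS P le r \<kappa> g \<longrightarrow>
        eq_on P le Z (conv P le (conv P le g \<kappa>) f))"

definition opp_le :: "('a \<Rightarrow> 'a \<Rightarrow> bool) \<Rightarrow> ('a \<Rightarrow> 'a \<Rightarrow> bool)" where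
  "opp_le le = (\<lambda>y x. le x y)"

definition opp_rank :: "('a \<Rightarrow> 'a \<Rightarrow> int) \<Rightarrow> ('a \<Rightarrow> 'a \<Rightarrow> int)" where
  "opp_rank r = (\<lambda>y x. r x y)"

definition star :: "('a \<Rightarrow> 'a \<Rightarrow> int poly) \<Rightarrow> ('a \<Rightarrow> 'a \<Rightarrow> int poly)" where
  "star f = (\<lambda>y x. f x y)"

end

theory Submission
  imports Defs
begin

lemma star_star[simp]: "star (star F) = F"
  by (simp add: star_def)

lemma conv_star: "conv P (opp_le le) (star a) (star b) = star (conv P le b a)"
  unfolding conv_def star_def opp_le_def
  by (intro ext sum.cong) (auto simp: mult.commute)

lemma conv_star2: "conv P (opp_le le) (star a) b = star (conv P le (star b) a)"
  using conv_star[of P le a "star b"] by simp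

lemma conv_star3: "conv P (opp_le le) a (star b) = star (conv P le b (star a))"
  using conv_star[of P le "star a" b] by simp

lemma bar_star: "bar (opp_rank r) (star f) = star (bar r f)"
  by (simp add: bar_def star_def opp_rank_def)

lemma bar_star2: "bar (opp_rank r) f = star (bar r (star f))"
  using bar_star[of r "star f"] by simp

lemma eq_on_star: "eq_on P (opp_le le) (star F) (star G) \<longleftrightarrow> eq_on P le F G"
  unfolding eq_on_def star_def opp_le_def by auto

lemma eq_on_star2: "eq_on P (opp_le le) F G \<longleftrightarrow> eq_on P le (star F) (star G)"
  using eq_on_star[of P le "star F" "star G"] by simp

lemma star_delta[simp]: "star delta = delta"
  by (auto simp: star_def delta_def intro!: ext)

lemma scrI_star: "in_scrI P (opp_le le) (opp_rank r) F \<longleftrightarrow> in_scrI P le r (star F)"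
  unfolding in_scrI_def star_def opp_le_def opp_rank_def by auto

lemma scrI_half_star: "in_scrI_half P (opp_le le) (opp_rank r) F \<longleftrightarrow> in_scrI_half P le r (star F)"
  unfolding in_scrI_half_def scrI_star unfolding star_def opp_le_def opp_rank_def by auto

lemma right_star: "right_KLS P (opp_le le) (opp_rank r) (star \<kappa>) F \<longleftrightarrow> left_KLS P le r \<kappa> (star F)"
  unfolding right_KLS_def left_KLS_def scrI_half_star bar_star2 conv_star2 eq_on_star ..

lemma left_star: "left_KLS P (opp_le le) (opp_rank r) (star \<kappa>) F \<longleftrightarrow> right_KLS P le r \<kappa> (star F)"
  unfolding right_KLS_def left_KLS_def scrI_half_star bar_star2 conv_star3 eq_on_star ..

lemma conv_assoc:
  assumes "weakly_ranked_poset P le r"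
  shows "eq_on P le (conv P le g (conv P le k f)) (conv P le (conv P le g k) f)"
  unfolding eq_on_def
proof (intro ballI impI)
  fix x z assume xz: "x \<in> P" "z \<in> P" "le x z"
  have tr: "\<And>a b c. a\<in>P \<Longrightarrow> b\<in>P \<Longrightarrow> c\<in>P \<Longrightarrow> le a b \<Longrightarrow> le b c \<Longrightarrow> le a c"
    using assms unfolding weakly_ranked_poset_def by blast
  define I where "I = {y\<in>P. le x y \<and> le y z}"
  have fin: "finite I" using assms xz unfolding weakly_ranked_poset_def I_def by blast
  have L: "conv P le g (conv P le k f) x z
     = (\<Sum>y\<in>I. \<Sum>w\<in>I. if le y w then g x y * (k y w * f w z) else 0)"
    unfolding conv_def I_def[symmetric]
  proof (rule sum.cong[OF refl])
    fix y assume y: "y \<in> I"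
    have "{w\<in>P. le y w \<and> le w z} = {w\<in>I. le y w}"
      using y tr xz unfolding I_def by blast
    then show "g x y * (\<Sum>w\<in>{w\<in>P. le y w \<and> le w z}. k y w * f w z)
        = (\<Sum>w\<in>I. if le y w then g x y * (k y w * f w z) else 0)"
      by (simp add: sum.inter_filter[OF fin] sum_distrib_left if_distrib cong: if_cong)
  qed
  have R: "conv P le (conv P le g k) f x z
     = (\<Sum>w\<in>I. \<Sum>y\<in>I. if le y w then g x y * (k y w * f w z) else 0)"
    unfolding conv_def I_def[symmetric]
  proof (rule sum.cong[OF refl])
    fix w assume w: "w \<in> I"
    have "{y\<in>P. le x y \<and> le y w} = {y\<in>I. le y w}"
      using w tr xz unfolding I_def by blast
    then show "(\<Sum>y\<in>{y\<in>P. le x y \<and> le y w}. g x y * k y w) * f w z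
        = (\<Sum>y\<in>I. if le y w then g x y * (k y w * f w z) else 0)"
      by (simp add: sum.inter_filter[OF fin] sum_distrib_right mult.assoc, intro sum.cong, auto)
  qed
  show "conv P le g (conv P le k f) x z = conv P le (conv P le g k) f x z"
    unfolding L R by (rule sum.swap)
qed

theorem proposition2p9:
  fixes P :: "'a set" and le :: "'a \<Rightarrow> 'a \<Rightarrow> bool" and r :: "'a \<Rightarrow> 'a \<Rightarrow> int"
    and \<kappa> Z :: "'a \<Rightarrow> 'a \<Rightarrow> int poly"
  assumes "weakly_ranked_poset P le r"
    and "is_kernel P le r \<kappa>"
    and "is_Z_function P le r \<kappa> Z"
  shows "is_kernel P (opp_le le) (opp_rank r) (star \<kappa>)
       \<and> is_Z_function P (opp_le le) (opp_rank r) (star \<kappa>) (star Z)"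
proof
  show "is_kernel P (opp_le le) (opp_rank r) (star \<kappa>)"
  proof -
    have k: "in_scrI P le r \<kappa>" "\<forall>x\<in>P. \<kappa> x x = 1"
      "eq_on P le (conv P le \<kappa> (bar r \<kappa>)) delta" "eq_on P le (conv P le (bar r \<kappa>) \<kappa>) delta"
      using assms(2) unfolding is_kernel_def by blast+
    have a: "eq_on P (opp_le le) (star (conv P le (bar r \<kappa>) \<kappa>)) (star delta)"
      "eq_on P (opp_le le) (star (conv P le \<kappa> (bar r \<kappa>))) (star delta)"
      using k by (simp_all only: eq_on_star)
    show ?thesis unfolding is_kernel_def scrI_star bar_star conv_star star_star
      using k a by (simp only: star_delta, simp add: star_def)
  qed
  have ex: "\<exists>f g. right_KLS P le r \<kappa> f \<and> left_KLS P le r \<kappa> g"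
    and Zp: "\<And>f g. right_KLS P le r \<kappa> f \<Longrightarrow> left_KLS P le r \<kappa> g \<Longrightarrow>
        eq_on P le Z (conv P le (conv P le g \<kappa>) f)"
    using assms(3) unfolding is_Z_function_def by blast+
  show "is_Z_function P (opp_le le) (opp_rank r) (star \<kappa>) (star Z)"
    unfolding is_Z_function_def
  proof (intro conjI allI impI)
    from ex obtain f g where "right_KLS P le r \<kappa> f" "left_KLS P le r \<kappa> g" by blast
    then have "right_KLS P (opp_le le) (opp_rank r) (star \<kappa>) (star g)"
      "left_KLS P (opp_le le) (opp_rank r) (star \<kappa>) (star f)"
      by (simp_all add: right_star left_star)
    then show "\<exists>f g. right_KLS P (opp_le le) (opp_rank r) (star \<kappa>) f \<and>
        left_KLS P (opp_le le) (opp_rank r) (star \<kappa>) g" by blast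
  next
    fix f g assume "right_KLS P (opp_le le) (opp_rank r) (star \<kappa>) f \<and>
        left_KLS P (opp_le le) (opp_rank r) (star \<kappa>) g"
    then have 1: "left_KLS P le r \<kappa> (star f)" "right_KLS P le r \<kappa> (star g)"
      by (simp_all add: right_star left_star)
    have e1: "eq_on P le Z (conv P le (conv P le (star f) \<kappa>) (star g))"
      using Zp[OF 1(2) 1(1)] .
    have e2: "eq_on P le (conv P le (star f) (conv P le \<kappa> (star g))) (conv P le (conv P le (star f) \<kappa>) (star g))"
      by (rule conv_assoc[OF assms(1)])
    have "conv P (opp_le le) (conv P (opp_le le) g (star \<kappa>)) f
        = star (conv P le (star f) (conv P le \<kappa> (star g)))"
      by (simp add: conv_star3 conv_star2)
    with e1 e2 show "eq_on P (opp_le le) (star Z) (conv P (opp_le le) (conv P (opp_le le) g (star \<kappa>)) f)"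
      by (simp add: eq_on_def star_def opp_le_def)
  qed
qed

end
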